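(* Assume $\mathbf E\mathbf E^\top$ and $\mathbf F^{(q)}\mathbf F^{(q)\top}$ ($1\le q\le Q$) are irreducible. Let $\bar{\mathbf S}=\mathbf J\boldsymbol\Sigma\mathbf J^\top$ be an eigenvalue decomposition with $\mathbf J\in\mathbb R^{K\times K}$ orthogonal and eigenvalues in decreasing order, let $\mathbf U=\boldsymbol\Theta_\theta\mathbf J=[\mathbf u_1,\dots,\mathbf u_K]$, and for any orthogonal $\mathbf O\in\mathbb R^{(K-1)\times(K-1)}$ and $c\in\{-1,1\}$ let $\mathbf R\in\mathbb R^{n\times(K-1)}$ have $i$-th row $\mathbf R_{\bar i}=([\mathbf u_2,\dots,\mathbf u_K]\mathbf O)_{\bar i}/(c\,\mathbf u_1(i))$. Then for all $1\le i_1,i_2\le n$: $\|\mathbf R_{\bar{i_1}}-\mathbf R_{\bar{i_2}}\|\ge2$ if $l_{i_1}\ne l_{i_2}$, and $\|\mathbf R_{\bar{i_1}}-\mathbf R_{\bar{i_2}}\|=0$ if $l_{i_1}=l_{i_2}$.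
   Context: Fix integers $K\ge2$, $K'\ge1$, $Q\ge1$. Primary nodes $\{1,\dots,n\}$ have labels $l_i\in\{1,\dots,K\}$, bipartite nodes $\{1,\dots,m\}$ have labels $r_j\in\{1,\dots,K'\}$, all communities nonempty. Parameters: $\boldsymbol\theta\in(0,1]^n$, $\boldsymbol\delta\in(0,1]^m$, symmetric $\mathbf E\in[0,1]^{K\times K}$, $\mathbf F^{(q)}\in[0,1]^{K\times K'}$. Define $\boldsymbol\theta^{(k)}_i=\theta_i\mathbb I(l_i=k)$, $\boldsymbol\delta^{(k')}_j=\delta_j\mathbb I(r_j=k')$, $\boldsymbol\Theta_\theta\in\mathbb R^{n\times K}$ with $\boldsymbol\Theta_\theta(i,k)=\theta_i\mathbb I(l_i=k)/\|\boldsymbol\theta^{(k)}\|$, $\boldsymbol\Psi_\theta=\mathrm{diag}(\|\boldsymbol\theta^{(k)}\|/\|\boldsymbol\theta\|)$, $\boldsymbol\Psi_\delta=\mathrm{diag}(\|\boldsymbol\delta^{(k')}\|/\|\boldsymbol\delta\|)$, $\mathbf S^{(0)}=\boldsymbol\Psi_\theta\mathbf E\boldsymbol\Psi_\theta$, $\mathbf S^{(q)}=\boldsymbol\Psi_\theta\mathbf F^{(q)}\boldsymbol\Psi_\delta$, $\bar{\mathbf S}=(\|\boldsymbol\theta\|^2/\|\boldsymbol\delta\|^2)\mathbf S^{(0)}\mathbf S^{(0)\top}+\sum_q\mathbf S^{(q)}\mathbf S^{(q)\top}$. Then $\mathbf U=\boldsymbol\Theta_\theta\mathbf J$ gives the $K$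 leading eigenvectors of the population aggregated matrix $\boldsymbol\Omega_M=\|\boldsymbol\theta\|^2\|\boldsymbol\delta\|^2\boldsymbol\Theta_\theta\bar{\mathbf S}\boldsymbol\Theta_\theta^\top$, and $\mathbf R$ is its ratio matrix. $\mathbf X_{\bar i}$ denotes the $i$-th row of a matrix $\mathbf X$; $\|\cdot\|$ is the Euclidean norm. *)

theory Defs
  imports Complex_Main
begin

text \<open>Matrices are represented as functions nat => nat => real, with 1-based
  indices; all dimensions are explicit.\<close>

text \<open>Irreducibility of a K x K matrix (standard definition: A is reducible iff,
  after a simultaneous permutation of rows and columns, it is block upper
  triangular, i.e. iff there is a nonempty proper index subset I with
  A i j = 0 for all i in I and j not in I).\<close>
definition irreducible_mat :: "nat \<Rightarrow> (nat \<Rightarrow> nat \<Rightarrow> real) \<Rightarrow> bool" where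
  "irreducible_mat K A \<longleftrightarrow>
     \<not> (\<exists>I. I \<subseteq> {1..K} \<and> I \<noteq> {} \<and> I \<noteq> {1..K} \<and>
            (\<forall>i\<in>I. \<forall>j\<in>{1..K} - I. A i j = 0))"

definition gram :: "nat \<Rightarrow> (nat \<Rightarrow> nat \<Rightarrow> real) \<Rightarrow> nat \<Rightarrow> nat \<Rightarrow> real" where
  "gram p A i j = (\<Sum>t\<in>{1..p}. A i t * A j t)"

definition orthogonal_mat :: "nat \<Rightarrow> (nat \<Rightarrow> nat \<Rightarrow> real) \<Rightarrow> bool" where
  "orthogonal_mat p A \<longleftrightarrow>
     (\<forall>i\<in>{1..p}. \<forall>j\<in>{1..p}. (\<Sum>t\<in>{1..p}. A t i * A t j) = (if i = j then 1 else 0))"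

definition comm_norm :: "nat \<Rightarrow> (nat \<Rightarrow> real) \<Rightarrow> (nat \<Rightarrow> nat) \<Rightarrow> nat \<Rightarrow> real" where
  "comm_norm n \<theta> l k = sqrt (\<Sum>i\<in>{1..n}. (if l i = k then \<theta> i else 0)^2)"

definition vnorm :: "nat \<Rightarrow> (nat \<Rightarrow> real) \<Rightarrow> real" where
  "vnorm n \<theta> = sqrt (\<Sum>i\<in>{1..n}. (\<theta> i)^2)"

definition Theta_mat :: "nat \<Rightarrow> (nat \<Rightarrow> real) \<Rightarrow> (nat \<Rightarrow> nat) \<Rightarrow> nat \<Rightarrow> nat \<Rightarrow> real" where
  "Theta_mat n \<theta> l i k = (if l i = k then \<theta> i else 0) / comm_norm n \<theta> l k"

text \<open>Diagonal entries of Psi_theta.\<close>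
definition Psi :: "nat \<Rightarrow> (nat \<Rightarrow> real) \<Rightarrow> (nat \<Rightarrow> nat) \<Rightarrow> nat \<Rightarrow> real" where
  "Psi n \<theta> l k = comm_norm n \<theta> l k / vnorm n \<theta>"

definition S0 :: "nat \<Rightarrow> (nat \<Rightarrow> real) \<Rightarrow> (nat \<Rightarrow> nat) \<Rightarrow> (nat \<Rightarrow> nat \<Rightarrow> real) \<Rightarrow> nat \<Rightarrow> nat \<Rightarrow> real" where
  "S0 n \<theta> l E k k' = Psi n \<theta> l k * E k k' * Psi n \<theta> l k'"

definition Sq :: "nat \<Rightarrow> (nat \<Rightarrow> real) \<Rightarrow> (nat \<Rightarrow> nat) \<Rightarrow> nat \<Rightarrow> (nat \<Rightarrow> real) \<Rightarrow> (nat \<Rightarrow> nat)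
                  \<Rightarrow> (nat \<Rightarrow> nat \<Rightarrow> real) \<Rightarrow> nat \<Rightarrow> nat \<Rightarrow> real" where
  "Sq n \<theta> l m \<delta> r Fq k k' = Psi n \<theta> l k * Fq k k' * Psi m \<delta> r k'"

definition Sbar :: "nat \<Rightarrow> nat \<Rightarrow> nat \<Rightarrow> nat \<Rightarrow> nat \<Rightarrow> (nat \<Rightarrow> real) \<Rightarrow> (nat \<Rightarrow> nat)
     \<Rightarrow> (nat \<Rightarrow> real) \<Rightarrow> (nat \<Rightarrow> nat) \<Rightarrow> (nat \<Rightarrow> nat \<Rightarrow> real) \<Rightarrow> (nat \<Rightarrow> nat \<Rightarrow> nat \<Rightarrow> real)
     \<Rightarrow> nat \<Rightarrow> nat \<Rightarrow> real" where
  "Sbar K K' Q n m \<theta> l \<delta> r E F k k'' =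
     (vnorm n \<theta>)^2 / (vnorm m \<delta>)^2 * gram K (S0 n \<theta> l E) k k''
     + (\<Sum>q\<in>{1..Q}. gram K' (Sq n \<theta> l m \<delta> r (F q)) k k'')"

end

theory Submission imports Defs "Jordan_Normal_Form.Determinant" begin

hide_const (open) Matrix.orthogonal_mat


lemma sum_shift1: "(\<Sum>t<(p::nat). f (t+1)) = (\<Sum>t\<in>{1..p}. (f t::real))"
  by (induction p) (simp_all add: sum.cl_ivl_Suc)

lemma orth_rows:
  assumes "orthogonal_mat p A" "i \<in> {1..p}" "j \<in> {1..p}"
  shows "(\<Sum>t\<in>{1..p}. A i t * A j t) = (if i = j then 1 else 0)"
proof -
  define M where "M = mat p p (\<lambda>(i,j). A (i+1) (j+1))"
  have o: "\<And>a b. a\<in>{1..p} \<Longrightarrow> b\<in>{1..p} \<Longrightarrow> (\<Sum>t\<in>{1..p}. A t a * A t b) = (if a = b then 1 else 0)"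
    using assms(1) unfolding Defs.orthogonal_mat_def by blast
  have M: "M \<in> carrier_mat p p" by (simp add: M_def)
  have "transpose_mat M * M = 1\<^sub>m p"
  proof (rule eq_matI)
    fix i j assume ij: "i < dim_row (1\<^sub>m p)" "j < dim_col (1\<^sub>m p)"
    have "(transpose_mat M * M) $$ (i,j) = (\<Sum>t<p. A (t+1) (i+1) * A (t+1) (j+1))"
      using ij by (simp add: M_def scalar_prod_def atLeast0LessThan)
    also have "\<dots> = (\<Sum>t\<in>{1..p}. A t (i+1) * A t (j+1))"
      by (rule sum_shift1)
    also have "\<dots> = (if i = j then 1 else 0)"
      using o[of "i+1" "j+1"] ij by auto
    finally show "(transpose_mat M * M) $$ (i,j) = 1\<^sub>m p $$ (i,j)" using ij by simp
  qed (auto simp: M_def)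
  then have MT: "M * transpose_mat M = 1\<^sub>m p"
    using mat_mult_left_right_inverse[of "transpose_mat M" p M] M by auto
  have i: "i - 1 < p" "j - 1 < p" using assms by auto
  have "(M * transpose_mat M) $$ (i-1,j-1) = (\<Sum>t<p. A i (t+1) * A j (t+1))"
    using i assms(2,3) by (simp add: M_def scalar_prod_def atLeast0LessThan)
  also have "\<dots> = (\<Sum>t\<in>{1..p}. A i t * A j t)" by (rule sum_shift1)
  finally show ?thesis using MT i assms(2,3) by (auto split: if_splits)
qed

lemma norm_pres:
  assumes "orthogonal_mat p A"
  shows "(\<Sum>j\<in>{1..p}. (\<Sum>t\<in>{1..p}. x t * A t j)^2) = (\<Sum>t\<in>{1..p}. (x t)^2)"
proof -
  have "(\<Sum>j\<in>{1..p}. (\<Sum>t\<in>{1..p}. x t * A t j)^2)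
      = (\<Sum>j\<in>{1..p}. \<Sum>t\<in>{1..p}. \<Sum>s\<in>{1..p}. x t * x s * (A t j * A s j))"
    by (simp add: power2_eq_square sum_product mult_ac)
  also have "\<dots> = (\<Sum>t\<in>{1..p}. \<Sum>j\<in>{1..p}. \<Sum>s\<in>{1..p}. x t * x s * (A t j * A s j))"
    by (rule sum.swap)
  also have "\<dots> = (\<Sum>t\<in>{1..p}. \<Sum>s\<in>{1..p}. \<Sum>j\<in>{1..p}. x t * x s * (A t j * A s j))"
    by (rule sum.cong[OF refl], rule sum.swap)
  also have "\<dots> = (\<Sum>t\<in>{1..p}. \<Sum>s\<in>{1..p}. x t * x s * (\<Sum>j\<in>{1..p}. A t j * A s j))"
    by (simp add: sum_distrib_left)
  also have "\<dots> = (\<Sum>t\<in>{1..p}. \<Sum>s\<in>{1..p}. x t * x s * (if t = s then 1 else 0))"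
    using orth_rows[OF assms] by (intro sum.cong refl) auto
  also have "\<dots> = (\<Sum>t\<in>{1..p}. (x t)^2)"
    by (simp add: power2_eq_square if_distrib cong: if_cong)
  finally show ?thesis .
qed

lemma quad_form:
  fixes S J :: "nat \<Rightarrow> nat \<Rightarrow> real"
  assumes S_eq: "\<forall>k\<in>{1..K}. \<forall>k'\<in>{1..K}. S k k' = (\<Sum>t\<in>{1..K}. J k t * \<sigma> t * J k' t)"
  shows "(\<Sum>i\<in>{1..K}. \<Sum>j\<in>{1..K}. S i j * f i * f j) = (\<Sum>t\<in>{1..K}. \<sigma> t * (\<Sum>i\<in>{1..K}. J i t * f i)^2)"
proof -
  have "(\<Sum>i\<in>{1..K}. \<Sum>j\<in>{1..K}. S i j * f i * f j)
     = (\<Sum>i\<in>{1..K}. \<Sum>j\<in>{1..K}. \<Sum>t\<in>{1..K}. \<sigma> t * ((J i t * f i) * (J j t * f j)))"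
    using S_eq by (intro sum.cong refl) (simp add: sum_distrib_left sum_distrib_right mult_ac)
  also have "\<dots> = (\<Sum>i\<in>{1..K}. \<Sum>t\<in>{1..K}. \<Sum>j\<in>{1..K}. \<sigma> t * ((J i t * f i) * (J j t * f j)))"
    by (rule sum.cong[OF refl], rule sum.swap)
  also have "\<dots> = (\<Sum>t\<in>{1..K}. \<Sum>i\<in>{1..K}. \<Sum>j\<in>{1..K}. \<sigma> t * ((J i t * f i) * (J j t * f j)))"
    by (rule sum.swap)
  also have "\<dots> = (\<Sum>t\<in>{1..K}. \<sigma> t * (\<Sum>i\<in>{1..K}. J i t * f i)^2)"
    by (simp add: power2_eq_square sum_distrib_left sum_distrib_right mult_ac)
  finally show ?thesis .
qed

lemma perron_nonzero:
  fixes S J :: "nat \<Rightarrow> nat \<Rightarrow> real"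
  assumes K1: "K \<ge> 1" and orth: "orthogonal_mat K J"
    and S_eq: "\<forall>k\<in>{1..K}. \<forall>k'\<in>{1..K}. S k k' = (\<Sum>t\<in>{1..K}. J k t * \<sigma> t * J k' t)"
    and S_nn: "\<forall>k\<in>{1..K}. \<forall>k'\<in>{1..K}. 0 \<le> S k k'"
    and decr: "\<forall>t\<in>{1..K}. \<sigma> t \<le> \<sigma> 1"
    and irr: "\<not> (\<exists>I. I \<subseteq> {1..K} \<and> I \<noteq> {} \<and> I \<noteq> {1..K} \<and> (\<forall>i\<in>I. \<forall>j\<in>{1..K} - I. S i j = 0))"
    and k: "k \<in> {1..K}"
  shows "J k 1 \<noteq> 0"
proof
  assume k0: "J k 1 = 0"
  define y where "y i = \<bar>J i 1\<bar>" for i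
  define w where "w t = (\<Sum>i\<in>{1..K}. J i t * y i)" for t
  have col: "\<And>a b. a\<in>{1..K} \<Longrightarrow> b\<in>{1..K} \<Longrightarrow> (\<Sum>t\<in>{1..K}. J t a * J t b) = (if a = b then 1 else 0)"
    using orth unfolding Defs.orthogonal_mat_def by blast
  have one: "1 \<in> {1..K}" using K1 by auto
  note quad = quad_form[OF S_eq]
  have qx: "(\<Sum>i\<in>{1..K}. \<Sum>j\<in>{1..K}. S i j * J i 1 * J j 1) = \<sigma> 1"
  proof -
    have "(\<Sum>i\<in>{1..K}. \<Sum>j\<in>{1..K}. S i j * J i 1 * J j 1)
        = (\<Sum>t\<in>{1..K}. if t = 1 then \<sigma> t else 0)"
      unfolding quad using col one by (intro sum.cong refl) auto
    also have "\<dots> = \<sigma> 1" using one by (simp add: sum.delta)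
    finally show ?thesis .
  qed
  have qxy: "(\<Sum>i\<in>{1..K}. \<Sum>j\<in>{1..K}. S i j * J i 1 * J j 1)
      \<le> (\<Sum>i\<in>{1..K}. \<Sum>j\<in>{1..K}. S i j * y i * y j)"
  proof (intro sum_mono)
    fix i j assume ij: "i \<in> {1..K}" "j \<in> {1..K}"
    have "J i 1 * J j 1 \<le> y i * y j" unfolding y_def by (metis abs_ge_self abs_mult)
    then have "S i j * (J i 1 * J j 1) \<le> S i j * (y i * y j)"
      using S_nn ij by (intro mult_left_mono) auto
    then show "S i j * J i 1 * J j 1 \<le> S i j * y i * y j" by (simp add: mult_ac)
  qed
  have ysum: "(\<Sum>i\<in>{1..K}. (y i)^2) = 1"
    using col[OF one one] by (simp add: y_def power2_eq_square)
  have wsum: "(\<Sum>t\<in>{1..K}. (w t)^2) = 1"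
    using norm_pres[OF orth, of y] ysum unfolding w_def by (simp add: mult_ac)
  have qy: "(\<Sum>i\<in>{1..K}. \<Sum>j\<in>{1..K}. S i j * y i * y j) = (\<Sum>t\<in>{1..K}. \<sigma> t * (w t)^2)"
    unfolding quad w_def ..
  have "(\<Sum>t\<in>{1..K}. \<sigma> t * (w t)^2) \<le> (\<Sum>t\<in>{1..K}. \<sigma> 1 * (w t)^2)"
    using decr by (intro sum_mono mult_right_mono) auto
  also have "\<dots> = \<sigma> 1" using wsum by (simp add: sum_distrib_left[symmetric])
  finally have le: "(\<Sum>t\<in>{1..K}. \<sigma> t * (w t)^2) \<le> \<sigma> 1" .
  have "(\<Sum>t\<in>{1..K}. (\<sigma> 1 - \<sigma> t) * (w t)^2) = (\<Sum>t\<in>{1..K}. \<sigma> 1 * (w t)^2) - (\<Sum>t\<in>{1..K}. \<sigma> t * (w t)^2)"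
    by (simp add: left_diff_distrib sum_subtractf)
  also have "\<dots> = 0" using le qx qxy qy wsum by (simp add: sum_distrib_left[symmetric])
  finally have z: "(\<Sum>t\<in>{1..K}. (\<sigma> 1 - \<sigma> t) * (w t)^2) = 0" .
  have "\<forall>t\<in>{1..K}. (\<sigma> 1 - \<sigma> t) * (w t)^2 = 0"
    using z decr by (subst sum_nonneg_eq_0_iff[symmetric]) auto
  then have sw: "\<And>t. t \<in> {1..K} \<Longrightarrow> \<sigma> t * w t = \<sigma> 1 * w t"
    by (metis eq_iff_diff_eq_0 mult_eq_0_iff power_eq_0_iff left_diff_distrib)
  have Sy: "(\<Sum>j\<in>{1..K}. S i j * y j) = \<sigma> 1 * y i" if i: "i \<in> {1..K}" for i
  proof -
    have "(\<Sum>j\<in>{1..K}. S i j * y j) = (\<Sum>j\<in>{1..K}. \<Sum>t\<in>{1..K}. J i t * \<sigma> t * (J j t * y j))"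
      using S_eq i by (intro sum.cong refl) (simp add: sum_distrib_left sum_distrib_right mult_ac)
    also have "\<dots> = (\<Sum>t\<in>{1..K}. \<Sum>j\<in>{1..K}. J i t * \<sigma> t * (J j t * y j))"
      by (rule sum.swap)
    also have "\<dots> = (\<Sum>t\<in>{1..K}. J i t * (\<sigma> t * w t))"
      by (simp add: w_def sum_distrib_left mult_ac)
    also have "\<dots> = (\<Sum>t\<in>{1..K}. J i t * (\<sigma> 1 * w t))"
      using sw by (intro sum.cong refl) auto
    also have "\<dots> = \<sigma> 1 * (\<Sum>t\<in>{1..K}. \<Sum>j\<in>{1..K}. J i t * J j t * y j)"
      by (simp add: w_def sum_distrib_left mult_ac)
    also have "\<dots> = \<sigma> 1 * (\<Sum>j\<in>{1..K}. \<Sum>t\<in>{1..K}. J i t * J j t * y j)"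
      by (subst sum.swap) simp
    also have "\<dots> = \<sigma> 1 * (\<Sum>j\<in>{1..K}. (if i = j then 1 else 0) * y j)"
      using orth_rows[OF orth i] by (simp add: sum_distrib_right[symmetric])
    also have "\<dots> = \<sigma> 1 * (\<Sum>j\<in>{1..K}. if i = j then y j else 0)"
      by (intro arg_cong[where f="\<lambda>z. \<sigma> 1 * z"] sum.cong refl) simp
    also have "\<dots> = \<sigma> 1 * y i" using i by (simp add: sum.delta)
    finally show ?thesis .
  qed
  define I where "I = {i\<in>{1..K}. y i = 0}"
  have "I \<subseteq> {1..K}" unfolding I_def by auto
  moreover have "I \<noteq> {}" using k k0 unfolding I_def y_def by auto
  moreover have "I \<noteq> {1..K}"
  proof
    assume "I = {1..K}"
    then have "\<forall>i\<in>{1..K}. y i = 0" unfolding I_def by auto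
    then have "(\<Sum>i\<in>{1..K}. (y i)^2) = 0" by simp
    with ysum show False by simp
  qed
  moreover have "\<forall>i\<in>I. \<forall>j\<in>{1..K} - I. S i j = 0"
  proof (intro ballI)
    fix i j assume i: "i \<in> I" and j: "j \<in> {1..K} - I"
    have i1: "i \<in> {1..K}" "y i = 0" using i unfolding I_def by auto
    have "(\<Sum>j\<in>{1..K}. S i j * y j) = 0" using Sy[OF i1(1)] i1(2) by simp
    moreover have "\<forall>j\<in>{1..K}. 0 \<le> S i j * y j" using S_nn i1 by (auto simp: y_def)
    ultimately have "\<forall>j\<in>{1..K}. S i j * y j = 0" using sum_nonneg_eq_0_iff[of "{1..K}" "\<lambda>j. S i j * y j"] by simp
    moreover have "y j \<noteq> 0" "j \<in> {1..K}" using j unfolding I_def by auto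
    ultimately show "S i j = 0" by auto
  qed
  ultimately show False using irr by blast
qed

lemma sum_split1:
  assumes "K \<ge> (1::nat)"
  shows "(\<Sum>t\<in>{1..K}. f t) = (f 1::real) + (\<Sum>t\<in>{1..K-1}. f (t+1))"
proof -
  obtain L where L: "K = Suc L" using assms by (cases K) auto
  have "(\<Sum>t\<in>{1..K}. f t) = (\<Sum>t<K. f (t+1))" by (rule sum_shift1[symmetric])
  also have "\<dots> = f 1 + (\<Sum>t<L. f (t+2))" unfolding L by (subst sum.lessThan_Suc_shift) simp
  also have "(\<Sum>t<L. f (t+2)) = (\<Sum>t\<in>{1..L}. f (t+1))"
    using sum_shift1[of "\<lambda>t. f (t+1)" L] by simp
  finally show ?thesis using L by simp
qed

lemma recip_ineq:
  fixes a b :: real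
  assumes "a \<noteq> 0" "b \<noteq> 0" "a^2 + b^2 \<le> 1"
  shows "4 \<le> 1/a^2 + 1/b^2"
proof -
  define A where "A = a^2"
  define B where "B = b^2"
  have A: "A > 0" "B > 0" "A + B \<le> 1" using assms by (auto simp: A_def B_def)
  have "(A+B)^2 \<le> A + B" using A by (simp add: power2_eq_square mult_left_le)
  moreover have "4*A*B \<le> (A+B)^2" using zero_le_power2[of "A-B"] by (simp add: power2_eq_square algebra_simps)
  ultimately have "4*A*B \<le> A+B" by simp
  then have "4 \<le> (A+B)/(A*B)" using A by (simp add: field_simps)
  also have "\<dots> = 1/A + 1/B" using A by (simp add: field_simps)
  finally show ?thesis by (simp add: A_def B_def)
qed

lemma dist_formula:
  fixes J Om :: "nat \<Rightarrow> nat \<Rightarrow> real"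
  assumes K: "K \<ge> 1" and orth: "orthogonal_mat K J" and O: "orthogonal_mat (K-1) Om"
    and k: "k \<in> {1..K}" "k' \<in> {1..K}" "k \<noteq> k'"
    and a: "J k 1 \<noteq> 0" and b: "J k' 1 \<noteq> 0" and c: "c^2 = (1::real)"
  shows "(\<Sum>j\<in>{1..K-1}. ((\<Sum>t\<in>{1..K-1}. J k (t+1) * Om t j) / (c * J k 1)
            - (\<Sum>t\<in>{1..K-1}. J k' (t+1) * Om t j) / (c * J k' 1))^2)
         = 1 / (J k 1)^2 + 1 / (J k' 1)^2"
proof -
  define a where "a = J k 1"
  define b where "b = J k' 1"
  define u where "u t = J k (t+1)" for t
  define v where "v t = J k' (t+1)" for t
  have c0: "c \<noteq> 0" using c by auto
  have "(\<Sum>j\<in>{1..K-1}. ((\<Sum>t\<in>{1..K-1}. J k (t+1) * Om t j) / (c * J k 1)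
            - (\<Sum>t\<in>{1..K-1}. J k' (t+1) * Om t j) / (c * J k' 1))^2)
     = (\<Sum>j\<in>{1..K-1}. (\<Sum>t\<in>{1..K-1}. (u t / (c*a) - v t / (c*b)) * Om t j)^2)"
    by (intro sum.cong refl) (simp add: u_def v_def a_def b_def sum_divide_distrib left_diff_distrib sum_subtractf)
  also have "\<dots> = (\<Sum>t\<in>{1..K-1}. (u t / (c*a) - v t / (c*b))^2)"
    by (rule norm_pres[OF O])
  also have "\<dots> = (\<Sum>t\<in>{1..K-1}. (u t)^2 / a^2 + (v t)^2 / b^2 - 2 * (u t * v t) / (a*b))"
    using c a b c0 unfolding a_def[symmetric] b_def[symmetric]
    by (intro sum.cong refl) (simp add: power2_diff field_simps power2_eq_square)
  also have "\<dots> = (\<Sum>t\<in>{1..K-1}. (u t)^2) / a^2 + (\<Sum>t\<in>{1..K-1}. (v t)^2) / b^2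
       - 2 * (\<Sum>t\<in>{1..K-1}. u t * v t) / (a*b)"
    by (simp add: sum.distrib sum_subtractf sum_divide_distrib sum_distrib_left)
  also have "(\<Sum>t\<in>{1..K-1}. (u t)^2) = 1 - a^2"
    using orth_rows[OF orth k(1) k(1)] sum_split1[OF K, of "\<lambda>t. J k t * J k t"]
    by (simp add: u_def a_def power2_eq_square)
  also have "(\<Sum>t\<in>{1..K-1}. (v t)^2) = 1 - b^2"
    using orth_rows[OF orth k(2) k(2)] sum_split1[OF K, of "\<lambda>t. J k' t * J k' t"]
    by (simp add: v_def b_def power2_eq_square)
  also have "(\<Sum>t\<in>{1..K-1}. u t * v t) = - (a * b)"
    using orth_rows[OF orth k(1) k(2)] sum_split1[OF K, of "\<lambda>t. J k t * J k' t"] k(3)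
    by (simp add: u_def v_def a_def b_def)
  also have "(1 - a^2) / a^2 + (1 - b^2) / b^2 - 2 * (- (a * b)) / (a*b) = 1/a^2 + 1/b^2"
    using a b unfolding a_def[symmetric] b_def[symmetric] by (simp add: field_simps)
  finally show ?thesis by (simp add: a_def b_def)
qed

theorem lemma4:
  fixes K K' Q n m :: nat
    and l :: "nat \<Rightarrow> nat" and r :: "nat \<Rightarrow> nat"
    and \<theta> \<delta> :: "nat \<Rightarrow> real"
    and E :: "nat \<Rightarrow> nat \<Rightarrow> real" and F :: "nat \<Rightarrow> nat \<Rightarrow> nat \<Rightarrow> real"
    and J Om :: "nat \<Rightarrow> nat \<Rightarrow> real" and \<sigma> :: "nat \<Rightarrow> real" and c :: real
  assumes K: "K \<ge> 2" and K': "K' \<ge> 1" and Q: "Q \<ge> 1"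
    and l_range: "\<forall>i\<in>{1..n}. l i \<in> {1..K}" and l_onto: "\<forall>k\<in>{1..K}. \<exists>i\<in>{1..n}. l i = k"
    and r_range: "\<forall>j\<in>{1..m}. r j \<in> {1..K'}" and r_onto: "\<forall>k\<in>{1..K'}. \<exists>j\<in>{1..m}. r j = k"
    and \<theta>_range: "\<forall>i\<in>{1..n}. 0 < \<theta> i \<and> \<theta> i \<le> 1"
    and \<delta>_range: "\<forall>j\<in>{1..m}. 0 < \<delta> j \<and> \<delta> j \<le> 1"
    and E_range: "\<forall>k\<in>{1..K}. \<forall>k'\<in>{1..K}. 0 \<le> E k k' \<and> E k k' \<le> 1"
    and E_sym: "\<forall>k\<in>{1..K}. \<forall>k'\<in>{1..K}. E k k' = E k' k"
    and F_range: "\<forall>q\<in>{1..Q}. \<forall>k\<in>{1..K}. \<forall>k'\<in>{1..K'}. 0 \<le> F q k k' \<and> F q k k' \<le> 1"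
    and E_irr: "irreducible_mat K (gram K E)"
    and F_irr: "\<forall>q\<in>{1..Q}. irreducible_mat K (gram K' (F q))"
    and J_orth: "orthogonal_mat K J"
    and eig: "\<forall>k\<in>{1..K}. \<forall>k''\<in>{1..K}.
               Sbar K K' Q n m \<theta> l \<delta> r E F k k'' = (\<Sum>t\<in>{1..K}. J k t * \<sigma> t * J k'' t)"
    and \<sigma>_decr: "\<forall>s\<in>{1..K}. \<forall>t\<in>{1..K}. s \<le> t \<longrightarrow> \<sigma> t \<le> \<sigma> s"
    and O_orth: "orthogonal_mat (K - 1) Om"
    and c: "c = 1 \<or> c = -1"
  defines "U \<equiv> \<lambda>i j. \<Sum>k\<in>{1..K}. Theta_mat n \<theta> l i k * J k j"
  defines "R \<equiv> \<lambda>i j. (\<Sum>t\<in>{1..K-1}. U i (t + 1) * Om t j) / (c * U i 1)"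
  shows "\<forall>i1\<in>{1..n}. \<forall>i2\<in>{1..n}.
           (l i1 \<noteq> l i2 \<longrightarrow> sqrt (\<Sum>j\<in>{1..K-1}. (R i1 j - R i2 j)^2) \<ge> 2) \<and>
           (l i1 = l i2 \<longrightarrow> sqrt (\<Sum>j\<in>{1..K-1}. (R i1 j - R i2 j)^2) = 0)"
proof -
  have n1: "n \<ge> 1" using l_onto K by (metis atLeastAtMost_iff le_trans one_le_numeral order_refl ex_in_conv empty_iff)
  have m1: "m \<ge> 1" using r_onto K' by force
  have cn_pos: "comm_norm n \<theta> l k > 0" if k: "k \<in> {1..K}" for k
  proof -
    obtain i where i: "i \<in> {1..n}" "l i = k" using l_onto k by blast
    have "0 < (\<Sum>i\<in>{1..n}. (if l i = k then \<theta> i else 0)^2)"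
      by (rule sum_pos2[OF _ i(1)]) (use i \<theta>_range[rule_format, OF i(1)] in auto)
    then show ?thesis unfolding comm_norm_def by simp
  qed
  have vn: "vnorm n \<theta> > 0"
  proof -
    have "0 < (\<Sum>i\<in>{1..n}. (\<theta> i)^2)"
      by (rule sum_pos2[of _ 1]) (use n1 \<theta>_range[rule_format, of 1] in auto)
    then show ?thesis unfolding vnorm_def by simp
  qed
  have vm: "vnorm m \<delta> > 0"
  proof -
    have "0 < (\<Sum>i\<in>{1..m}. (\<delta> i)^2)"
      by (rule sum_pos2[of _ 1]) (use m1 \<delta>_range[rule_format, of 1] in auto)
    then show ?thesis unfolding vnorm_def by simp
  qed
  have psi_pos: "Psi n \<theta> l k > 0" if "k \<in> {1..K}" for k
    using cn_pos[OF that] vn by (simp add: Psi_def)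
  have psi_nn: "Psi m \<delta> r k \<ge> 0" for k
    unfolding Psi_def comm_norm_def vnorm_def by (intro divide_nonneg_nonneg real_sqrt_ge_zero sum_nonneg) auto
  have S0_nn: "S0 n \<theta> l E k k' \<ge> 0" if "k \<in> {1..K}" "k' \<in> {1..K}" for k k'
    using psi_pos[OF that(1)] psi_pos[OF that(2)] E_range that unfolding S0_def by simp
  have Sq_nn: "Sq n \<theta> l m \<delta> r (F q) k k' \<ge> 0" if "q \<in> {1..Q}" "k \<in> {1..K}" "k' \<in> {1..K'}" for q k k'
    using psi_pos[OF that(2)] psi_nn[of k'] F_range that unfolding Sq_def by simp
  have g0_nn: "gram K (S0 n \<theta> l E) k k' \<ge> 0" if "k \<in> {1..K}" "k' \<in> {1..K}" for k k'
    unfolding gram_def using S0_nn that by (intro sum_nonneg) auto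
  have gq_nn: "gram K' (Sq n \<theta> l m \<delta> r (F q)) k k' \<ge> 0" if "q \<in> {1..Q}" "k \<in> {1..K}" "k' \<in> {1..K}" for q k k'
    unfolding gram_def using Sq_nn that by (intro sum_nonneg) auto
  have alpha: "(vnorm n \<theta>)^2 / (vnorm m \<delta>)^2 > 0" using vn vm by simp
  have Sbar_nn: "\<forall>k\<in>{1..K}. \<forall>k'\<in>{1..K}. 0 \<le> Sbar K K' Q n m \<theta> l \<delta> r E F k k'"
  proof (intro ballI)
    fix k k' assume kk: "k \<in> {1..K}" "k' \<in> {1..K}"
    have "0 \<le> (vnorm n \<theta>)^2 / (vnorm m \<delta>)^2 * gram K (S0 n \<theta> l E) k k'"
      using alpha g0_nn[OF kk] by simp
    moreover have "0 \<le> (\<Sum>q\<in>{1..Q}. gram K' (Sq n \<theta> l m \<delta> r (F q)) k k')"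
      using gq_nn kk by (intro sum_nonneg) auto
    ultimately show "0 \<le> Sbar K K' Q n m \<theta> l \<delta> r E F k k'" unfolding Sbar_def by simp
  qed
  have Sbar_zero: "gram K E k k' = 0"
    if kk: "k \<in> {1..K}" "k' \<in> {1..K}" and z: "Sbar K K' Q n m \<theta> l \<delta> r E F k k' = 0" for k k'
  proof -
    have A: "0 \<le> (vnorm n \<theta>)^2 / (vnorm m \<delta>)^2 * gram K (S0 n \<theta> l E) k k'"
      using alpha g0_nn[OF kk] by simp
    have B: "0 \<le> (\<Sum>q\<in>{1..Q}. gram K' (Sq n \<theta> l m \<delta> r (F q)) k k')"
      using gq_nn kk by (intro sum_nonneg) auto
    have "(vnorm n \<theta>)^2 / (vnorm m \<delta>)^2 * gram K (S0 n \<theta> l E) k k' = 0"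
      using A B z unfolding Sbar_def by linarith
    then have g0: "gram K (S0 n \<theta> l E) k k' = 0" using vn vm by simp
    have "\<forall>t\<in>{1..K}. S0 n \<theta> l E k t * S0 n \<theta> l E k' t = 0"
      using g0 S0_nn kk unfolding gram_def
      by (subst sum_nonneg_eq_0_iff[symmetric]) (auto intro: mult_nonneg_nonneg)
    then have "\<forall>t\<in>{1..K}. E k t * E k' t = 0"
    proof (intro ballI)
      fix t assume t: "t \<in> {1..K}" and h: "\<forall>t\<in>{1..K}. S0 n \<theta> l E k t * S0 n \<theta> l E k' t = 0"
      have "(Psi n \<theta> l k * Psi n \<theta> l k' * (Psi n \<theta> l t)^2) * (E k t * E k' t) = 0"
      proof -
        have "S0 n \<theta> l E k t * S0 n \<theta> l E k' t = 0" using h t by blast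
        then show ?thesis unfolding S0_def by (simp only: power2_eq_square mult_ac)
      qed
      moreover have "Psi n \<theta> l k * Psi n \<theta> l k' * (Psi n \<theta> l t)^2 \<noteq> 0"
        using psi_pos[OF kk(1)] psi_pos[OF kk(2)] psi_pos[OF t] by simp
      ultimately show "E k t * E k' t = 0" by simp
    qed
    then show ?thesis unfolding gram_def by (intro sum.neutral) blast
  qed
  have irrS: "\<not> (\<exists>I. I \<subseteq> {1..K} \<and> I \<noteq> {} \<and> I \<noteq> {1..K} \<and>
      (\<forall>i\<in>I. \<forall>j\<in>{1..K} - I. Sbar K K' Q n m \<theta> l \<delta> r E F i j = 0))"
  proof
    assume "\<exists>I. I \<subseteq> {1..K} \<and> I \<noteq> {} \<and> I \<noteq> {1..K} \<and>
      (\<forall>i\<in>I. \<forall>j\<in>{1..K} - I. Sbar K K' Q n m \<theta> l \<delta> r E F i j = 0)"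
    then obtain I where I: "I \<subseteq> {1..K}" "I \<noteq> {}" "I \<noteq> {1..K}"
      "\<forall>i\<in>I. \<forall>j\<in>{1..K} - I. Sbar K K' Q n m \<theta> l \<delta> r E F i j = 0" by blast
    then have "\<forall>i\<in>I. \<forall>j\<in>{1..K} - I. gram K E i j = 0" using Sbar_zero by blast
    with I(1-3) E_irr show False unfolding irreducible_mat_def by blast
  qed
  have K1: "K \<ge> 1" using K by simp
  have decr: "\<forall>t\<in>{1..K}. \<sigma> t \<le> \<sigma> 1" using \<sigma>_decr K1 by auto
  have Jnz: "J k 1 \<noteq> 0" if "k \<in> {1..K}" for k
    by (rule perron_nonzero[OF K1 J_orth eig Sbar_nn decr irrS that])
  define Rk where "Rk k j = (\<Sum>t\<in>{1..K-1}. J k (t+1) * Om t j) / (c * J k 1)" for k j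
  have Ueq: "U i j = \<theta> i / comm_norm n \<theta> l (l i) * J (l i) j" if i: "i \<in> {1..n}" for i j
  proof -
    have "U i j = (\<Sum>k\<in>{1..K}. if k = l i then \<theta> i / comm_norm n \<theta> l (l i) * J (l i) j else 0)"
      unfolding U_def Theta_mat_def by (intro sum.cong refl) auto
    also have "\<dots> = \<theta> i / comm_norm n \<theta> l (l i) * J (l i) j"
      using l_range i by (simp add: sum.delta')
    finally show ?thesis .
  qed
  have Req: "R i j = Rk (l i) j" if i: "i \<in> {1..n}" for i j
  proof -
    define g where "g = \<theta> i / comm_norm n \<theta> l (l i)"
    have g: "g \<noteq> 0" using cn_pos[of "l i"] l_range[rule_format, OF i] \<theta>_range[rule_format, OF i] unfolding g_def by auto
    have c0: "c \<noteq> 0" using c by auto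
    have "R i j = (g * (\<Sum>t\<in>{1..K-1}. J (l i) (t+1) * Om t j)) / (c * (g * J (l i) 1))"
      unfolding R_def Ueq[OF i] g_def[symmetric] by (simp add: sum_distrib_left mult_ac)
    also have "\<dots> = Rk (l i) j" unfolding Rk_def using g c0 by simp
    finally show ?thesis .
  qed
  show ?thesis
  proof (intro ballI conjI impI)
    fix i1 i2 assume i: "i1 \<in> {1..n}" "i2 \<in> {1..n}"
    {
      assume "l i1 = l i2"
      then show "sqrt (\<Sum>j\<in>{1..K-1}. (R i1 j - R i2 j)^2) = 0" using Req i by simp
    }
    assume ne: "l i1 \<noteq> l i2"
    have k: "l i1 \<in> {1..K}" "l i2 \<in> {1..K}" using l_range i by auto
    have c2: "c^2 = 1" using c by auto
    have "(\<Sum>j\<in>{1..K-1}. (R i1 j - R i2 j)^2) = 1 / (J (l i1) 1)^2 + 1 / (J (l i2) 1)^2"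
      using dist_formula[OF K1 J_orth O_orth k ne Jnz[OF k(1)] Jnz[OF k(2)] c2] Req i
      unfolding Rk_def by simp
    also have "\<dots> \<ge> 4"
    proof (rule recip_ineq[OF Jnz[OF k(1)] Jnz[OF k(2)]])
      have col: "(\<Sum>t\<in>{1..K}. J t 1 * J t 1) = 1"
        using J_orth K1 unfolding Defs.orthogonal_mat_def by auto
      have "(\<Sum>t\<in>{l i1, l i2}. (J t 1)^2) \<le> (\<Sum>t\<in>{1..K}. (J t 1)^2)"
        using k by (intro sum_mono2) auto
      then show "(J (l i1) 1)^2 + (J (l i2) 1)^2 \<le> 1" using ne col by (simp add: power2_eq_square)
    qed
    finally have "4 \<le> (\<Sum>j\<in>{1..K-1}. (R i1 j - R i2 j)^2)" .
    then have "sqrt 4 \<le> sqrt (\<Sum>j\<in>{1..K-1}. (R i1 j - R i2 j)^2)" by (rule real_sqrt_le_mono)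
    then show "sqrt (\<Sum>j\<in>{1..K-1}. (R i1 j - R i2 j)^2) \<ge> 2" by simp
  qed
qed

end
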